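(* Let $r\ge1$, $\ell\ge1$, $N\ge2r+1$, and let $w\in\mathcal B$ be a word of weight $N$ and level $\ell$. Then (a) $\partial_{2r+1}(w)\in\mathbb Q\langle\mathcal X\rangle_{2r+1}\otimes F_{\ell-1}\mathcal B$; and (b) $\partial_{2r+1}(w)\equiv\eta \pmod{\mathbb Q\langle\mathcal X\rangle_{2r+1}\otimes F_{\ell-2}\mathcal B}$ for some $\eta\in\mathcal B^1\otimes(\text{span of words in }\mathcal B\text{ of weight }N-2r-1\text{ and level exactly }\ell-1)$. Equivalently, the induced map $\partial^{(\ell)}_{2r+1}:\operatorname{gr}^F_\ell(\mathcal B)_N\to\mathbb Q\langle\mathcal X\rangle_{2r+1}\otimes\operatorname{gr}^F_{\ell-1}(\mathcal B)_{N-2r-1}$ takes values in $\mathcal B^1\otimes\operatorname{gr}^F_{\ell-1}(\mathcal B)_{N-2r-1}$.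
   Context: $\mathcal X=\{x_0,x_1\}$, $\mathbb Q\langle\mathcal X\rangle$ free noncommutative polynomials graded by weight (number of letters), weight-$n$ part $\mathbb Q\langle\mathcal X\rangle_n$. $\mathcal B$ is the span of all concatenations of $x_0x_1$ and $x_0x_0x_1$; the level of such a word is the number of blocks $x_0x_0x_1$ in it; $F_\ell\mathcal B$ is the span of words of level $\le\ell$ ($F_{-1}\mathcal B=0$), and $\operatorname{gr}^F_\ell\mathcal B=F_\ell\mathcal B/F_{\ell-1}\mathcal B$. $\mathcal B^1\subset\mathbb Q\langle\mathcal X\rangle$ is the span of the words $(x_0x_1)^ax_0x_0x_1(x_0x_1)^b$ ($a,b\ge0$) and $(x_0x_1)^nx_0$ ($n\ge0$). For letters: $I(x_1;f;x_0)=f$, $I(x_0;f;x_1)=S(f)$ with $S(\varepsilon_1\cdots\varepsilon_m)=(-1)^m\varepsilon_m\cdots\varepsilon_1$, $I(\varepsilon;f;\varepsilon)$ = coefficient of $\mathbf1$ in $f$ times $\mathbf1$. For a word $w=\varepsilon_1\cdots\varepsilon_N$, $\partial_{2r+1}(w)=\sum_{j=0}^{N-2r-1}I(\varepsilon_j;\varepsilon_{j+1}\cdots\varepsilon_{j+2r+1};\varepsilon_{j+2r+2})\otimes\varepsilon_1\cdots\varepsilon_j\varepsilon_{j+2r+2}\cdots\varepsilon_N$ with $\varepsilon_0=x_1$, $\varepsilon_{N+1}=x_0$, extended linearly. *)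

theory Defs
  imports Complex_Main
begin

text \<open>Noncommutative polynomials over Q
are (finitely supported) functions from words to rat; elements of
Q<X> \<otimes> Q<X> are finitely supported functions on pairs of words (pairs of
words form a basis of the tensor product).\<close>

datatype letter = X0 | X1

type_synonym word = "letter list"
type_synonym poly = "word \<Rightarrow> rat"
type_synonym tensor = "word \<times> word \<Rightarrow> rat"

text \<open>Bword w l: w is a concatenation of blocks x0x1 and x0x0x1, containing
exactly l blocks x0x0x1 (i.e. w is a word of B of level l).\<close>
inductive Bword :: "word \<Rightarrow> nat \<Rightarrow> bool" where
  Bnil: "Bword [] 0"
| Bshort: "Bword w l \<Longrightarrow> Bword ([X0, X1] @ w) l"
| Blong: "Bword w l \<Longrightarrow> Bword ([X0, X0, X1] @ w) (Suc l)"

text \<open>Words spanning F_k B (levels \<le> k; k may be negative, F_{-1} = 0).\<close>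
definition Fwords :: "int \<Rightarrow> word set" where
  "Fwords k = {v. \<exists>l. Bword v l \<and> int l \<le> k}"

definition B1words :: "word set" where
  "B1words =
     {concat (replicate a [X0, X1]) @ [X0, X0, X1] @ concat (replicate b [X0, X1]) | a b. True}
   \<union> {concat (replicate n [X0, X1]) @ [X0] | n. True}"

text \<open>Membership of a tensor in span(A) \<otimes> span(C), A, C sets of words.\<close>
definition in_tensor :: "word set \<Rightarrow> word set \<Rightarrow> tensor \<Rightarrow> bool" where
  "in_tensor A C T \<longleftrightarrow> finite {p. T p \<noteq> 0} \<and> (\<forall>u v. T (u, v) \<noteq> 0 \<longrightarrow> u \<in> A \<and> v \<in> C)"

definition single :: "word \<Rightarrow> rat \<Rightarrow> poly" where
  "single u c = (\<lambda>v. if v = u then c else 0)"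

definition Iw :: "letter \<Rightarrow> word \<Rightarrow> letter \<Rightarrow> poly" where
  "Iw a f b =
     (if a = X1 \<and> b = X0 then single f 1
      else if a = X0 \<and> b = X1 then single (rev f) ((-1) ^ length f)
      else if f = [] then single [] 1 else (\<lambda>_. 0))"

definition deriv :: "nat \<Rightarrow> word \<Rightarrow> tensor" where
  "deriv k w = (\<lambda>(u, v). \<Sum>j\<in>{0..length w - k}.
      (let ext = X1 # w @ [X0] in
        Iw (ext ! j) (take k (drop j w)) (ext ! (j + k + 1)) u
        * (if v = take j w @ drop (j + k) w then 1 else 0)))"

end

theory Submission imports Defs begin

definition noF :: "word \<Rightarrow> word \<Rightarrow> bool" where
  "noF pat w \<longleftrightarrow> \<not>(\<exists>p q. w = p @ pat @ q)"

lemma noF_Nil[simp]: "pat \<noteq> [] \<Longrightarrow> noF pat []"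
  by (simp add: noF_def)

lemma letter_neq[simp]: "(a \<noteq> X1) = (a = X0)" "(a \<noteq> X0) = (a = X1)"
  by (cases a; simp)+

lemma noF_Cons: "noF pat (x # ys) \<longleftrightarrow> \<not>(\<exists>q. x # ys = pat @ q) \<and> noF pat ys"
  unfolding noF_def
  apply (rule iffI)
   apply (metis append_Cons append_Nil)
  apply clarify
  subgoal for p q by (cases p) auto
  done

lemma noF_factor: "noF pat (a @ b @ c) \<Longrightarrow> noF pat b"
  unfolding noF_def by (metis append.assoc)

lemma noF_rev: "rev pat = pat \<Longrightarrow> noF pat (rev w) = noF pat w"
  unfolding noF_def by (metis rev_append rev_rev_ident append.assoc)

definition nf :: "word \<Rightarrow> bool" where
  "nf w \<longleftrightarrow> noF [X1, X1] w \<and> noF [X0, X0, X0] w"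

definition good :: "word \<Rightarrow> bool" where
  "good w \<longleftrightarrow> nf w \<and> (w \<noteq> [] \<longrightarrow> hd w = X0 \<and> last w = X1)"

lemma nf_factor: "nf (a @ b @ c) \<Longrightarrow> nf b"
  unfolding nf_def using noF_factor by blast

lemma nf_rev: "nf (rev w) = nf w"
  unfolding nf_def by (simp add: noF_rev)

lemma Bword_good: "Bword w l \<Longrightarrow> good w"
proof (induction rule: Bword.induct)
  case Bnil then show ?case by (simp add: good_def nf_def)
next
  case (Bshort w l) then show ?case
    by (cases w) (auto simp: good_def nf_def noF_Cons)
next
  case (Blong w l) then show ?case
    by (cases w) (auto simp: good_def nf_def noF_Cons)
qed

lemma Bword_ext: "Bword w l \<Longrightarrow> nf (X1 # w @ [X0])"
proof (induction rule: Bword.induct)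
  case Bnil then show ?case by (simp add: nf_def noF_Cons)
next
  case (Bshort w l) then show ?case
    by (auto simp: nf_def noF_Cons)
next
  case (Blong w l) then show ?case
    by (auto simp: nf_def noF_Cons)
qed

lemma Bword_count: "Bword w l \<Longrightarrow> int l = int (count_list w X0) - int (count_list w X1)"
  by (induction rule: Bword.induct) auto

lemma Bword_unique: "Bword w l1 \<Longrightarrow> Bword w l2 \<Longrightarrow> l1 = l2"
proof -
  assume "Bword w l1" "Bword w l2"
  then have "int l1 = int l2" using Bword_count by metis
  then show ?thesis by simp
qed

lemma Bword_append: "Bword x l1 \<Longrightarrow> Bword y l2 \<Longrightarrow> Bword (x @ y) (l1 + l2)"
  by (induction rule: Bword.induct) (auto intro: Bword.intros[simplified])

lemma length_count: "length (w::word) = count_list w X0 + count_list w X1"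
proof (induction w)
  case (Cons a w) then show ?case by (cases a) auto
qed simp

lemma good_Bword: "good w \<Longrightarrow> \<exists>l. Bword w l"
proof (induction w rule: length_induct)
  case (1 w)
  show ?case
  proof (cases w)
    case Nil then show ?thesis using Bnil by blast
  next
    case (Cons a w1)
    with 1 have a: "a = X0" by (simp add: good_def)
    show ?thesis
    proof (cases w1)
      case Nil then show ?thesis using 1 Cons a by (simp add: good_def)
    next
      case (Cons b w2)
      show ?thesis
      proof (cases b)
        case X1
        have "good w2" using 1(2) \<open>w = a # w1\<close> Cons X1 a
          by (cases w2) (auto simp: good_def nf_def noF_Cons)
        then obtain l where "Bword w2 l" using 1(1) \<open>w = a # w1\<close> Cons by force
        then show ?thesis using Bshort \<open>w = a # w1\<close> Cons X1 a by force
      next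
        case X0
        then obtain w3 where w2: "w2 = X1 # w3" using 1(2) \<open>w = a # w1\<close> Cons a
          apply (cases w2) apply (simp add: good_def)
          subgoal for c w3 by (cases c) (auto simp: good_def nf_def noF_Cons)
          done
        have "good w3" using 1(2) \<open>w = a # w1\<close> Cons X0 a w2
          by (cases w3) (auto simp: good_def nf_def noF_Cons)
        then obtain l where "Bword w3 l" using 1(1) \<open>w = a # w1\<close> Cons w2 by force
        then show ?thesis using Blong \<open>w = a # w1\<close> Cons X0 a w2 by force
      qed
    qed
  qed
qed

lemma good_append: "good x \<Longrightarrow> good y \<Longrightarrow> good (x @ y)"
  using good_Bword Bword_append Bword_good by blast

lemma good_prefix: "good (A @ R) \<Longrightarrow> A = [] \<or> last A = X1 \<Longrightarrow> good A"
  unfolding good_def using nf_factor[of "[]" A R] by auto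

lemma good_suffix: "good (L @ C) \<Longrightarrow> C = [] \<or> hd C = X0 \<Longrightarrow> good C"
  unfolding good_def using nf_factor[of L C "[]"] by auto

lemma Bword0: "Bword w l \<Longrightarrow> l = 0 \<Longrightarrow> \<exists>n. w = concat (replicate n [X0, X1])"
proof (induction rule: Bword.induct)
  case (Bshort w l)
  then obtain n where "w = concat (replicate n [X0, X1])" by blast
  then show ?case by (intro exI[of _ "Suc n"]) simp
qed auto

lemma Bword1: "Bword w l \<Longrightarrow> l = 1 \<Longrightarrow>
   \<exists>a b. w = concat (replicate a [X0, X1]) @ [X0, X0, X1] @ concat (replicate b [X0, X1])"
proof (induction rule: Bword.induct)
  case (Bshort w l)
  then obtain a b where "w = concat (replicate a [X0, X1]) @ [X0, X0, X1] @ concat (replicate b [X0, X1])" by blast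
  then show ?case by (intro exI[of _ "Suc a"] exI[of _ b]) simp
next
  case (Blong w l)
  then obtain b where "w = concat (replicate b [X0, X1])" using Bword0 by auto
  then show ?case by (intro exI[of _ 0] exI[of _ b]) simp
qed auto

lemma good_of_ext: "nf (X1 # g @ R) \<Longrightarrow> g = [] \<or> last g = X1 \<Longrightarrow> good g"
proof -
  assume a: "nf (X1 # g @ R)" "g = [] \<or> last g = X1"
  have "nf g" using nf_factor[of "[X1]" g R] a(1) by simp
  moreover have "g \<noteq> [] \<Longrightarrow> hd g = X0"
    using a(1) by (cases g) (auto simp: nf_def noF_Cons)
  ultimately show ?thesis using a(2) by (auto simp: good_def)
qed

lemma core:
  assumes "nf (X1 # g @ [X0])" "odd (length g)"
  shows "count_list g X1 < count_list g X0 \<and>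
         (count_list g X0 = Suc (count_list g X1) \<longrightarrow> g \<in> B1words)"
proof (cases "g = [] \<or> last g = X1")
  case True
  then have "good g" using good_of_ext assms(1) by blast
  then obtain l where B: "Bword g l" using good_Bword by blast
  have c: "int l = int (count_list g X0) - int (count_list g X1)" using Bword_count[OF B] .
  have "odd l" using assms(2) c length_count[of g] by presburger
  then have "count_list g X1 < count_list g X0" using c by presburger
  moreover have "g \<in> B1words" if "count_list g X0 = Suc (count_list g X1)"
  proof -
    have "l = 1" using c that by simp
    then show ?thesis using Bword1[OF B] unfolding B1words_def by blast
  qed
  ultimately show ?thesis by blast
next
  case False
  then obtain g1 where g: "g = g1 @ [X0]" by (metis append_butlast_last_id letter_neq(1))
  have g1: "g1 = [] \<or> last g1 = X1"
  proof (rule ccontr)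
    assume "\<not> ?thesis"
    then obtain g2 where "g1 = g2 @ [X0]" by (metis append_butlast_last_id letter_neq(1))
    then have "X1 # g @ [X0] = (X1 # g2) @ [X0, X0, X0] @ []" using g by simp
    then show False using assms(1) by (metis nf_def noF_def)
  qed
  have "nf (X1 # g1 @ [X0, X0])" using assms(1) g by simp
  then have "good g1" using good_of_ext g1 by blast
  then obtain l where B: "Bword g1 l" using good_Bword by blast
  have c: "int l = int (count_list g1 X0) - int (count_list g1 X1)" using Bword_count[OF B] .
  have "even l" using assms(2) c length_count[of g1] g by simp presburger
  then have "count_list g X1 < count_list g X0" using c g by simp
  moreover have "g \<in> B1words" if "count_list g X0 = Suc (count_list g X1)"
  proof -
    have "l = 0" using c that g by simp
    then show ?thesis using Bword0[OF B] g unfolding B1words_def by blast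
  qed
  ultimately show ?thesis by blast
qed


lemma count_rev: "count_list (rev xs) x = count_list xs x"
  by (induction xs) auto

lemma good_nf: "good w \<Longrightarrow> nf w" by (simp add: good_def)

lemma key:
  assumes G: "good (A @ f @ C)" and O: "odd (length f)"
    and I: "Iw (last (X1 # A)) f (hd (C @ [X0])) u \<noteq> 0"
  shows "length u = length f \<and> good (A @ C) \<and> count_list f X1 < count_list f X0 \<and>
         (count_list f X0 = Suc (count_list f X1) \<longrightarrow> u \<in> B1words)"
proof -
  define a where "a = last (X1 # A)"
  define b where "b = hd (C @ [X0])"
  have fne: "f \<noteq> []" using O by auto
  obtain l where "Bword (A @ f @ C) l" using good_Bword G by blast
  then have E: "nf (X1 # (A @ f @ C) @ [X0])" by (rule Bword_ext)
  have "X1 # (A @ f @ C) @ [X0] = butlast (X1 # A) @ (a # f @ [b]) @ tl (C @ [X0])"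
    unfolding a_def b_def
    by (metis (no_types) append_butlast_last_id append_Cons append.assoc list.collapse
        snoc_eq_iff_butlast append_is_Nil_conv list.discI append_Nil)
  then have N: "nf (a # f @ [b])" using E nf_factor by metis
  show ?thesis
  proof (cases a)
    case X1
    show ?thesis
    proof (cases b)
      case X1 then show ?thesis using I fne \<open>a = X1\<close> unfolding a_def b_def by (simp add: Iw_def)
    next
      case X0
      have u: "u = f" using I \<open>a = X1\<close> X0 unfolding a_def b_def
        by (simp add: Iw_def single_def split: if_splits)
      have "A = [] \<or> last A = X1" using \<open>a = X1\<close> unfolding a_def by (cases A) auto
      then have gA: "good A" using good_prefix[of A "f @ C"] G by simp
      have "C = [] \<or> hd C = X0" using X0 unfolding b_def by (cases C) auto
      then have gC: "good C" using good_suffix[of "A @ f" C] G by simp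
      show ?thesis using core[of f] N \<open>a = X1\<close> X0 O u good_append[OF gA gC] by simp
    qed
  next
    case X0
    show ?thesis
    proof (cases b)
      case X0 then show ?thesis using I fne \<open>a = X0\<close> unfolding a_def b_def by (simp add: Iw_def)
    next
      case X1
      have u: "u = rev f" using I \<open>a = X0\<close> X1 unfolding a_def b_def
        by (simp add: Iw_def single_def split: if_splits)
      have "nf (X1 # rev f @ [X0])" using N \<open>a = X0\<close> X1 nf_rev[of "X0 # f @ [X1]"] by simp
      then have cr: "count_list f X1 < count_list f X0 \<and>
         (count_list f X0 = Suc (count_list f X1) \<longrightarrow> rev f \<in> B1words)"
        using core[of "rev f"] O by (simp add: count_rev)
      have nfw: "nf (A @ f @ C)" using G good_nf by blast
      obtain A1 where A1: "A = A1 @ [X0]" using \<open>a = X0\<close> unfolding a_def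
        by (metis append_butlast_last_id last.simps letter.distinct(1))
      obtain C1 where C1: "C = X1 # C1" using X1 unfolding b_def
        by (cases C) auto
      have "C1 = [] \<or> hd C1 = X0"
      proof (rule ccontr)
        assume "\<not> ?thesis"
        then obtain C2 where "C1 = X1 # C2" by (cases C1) auto
        then have "A @ f @ C = (A @ f) @ [X1, X1] @ C2" using C1 by simp
        then show False using nfw by (metis nf_def noF_def)
      qed
      then have gC1: "good C1" using good_suffix[of "A @ f @ [X1]" C1] G C1 by simp
      have gs: "\<exists>A' s. A = A' @ s \<and> good A' \<and> (s = [X0] \<or> s = [X0, X0])"
      proof (cases "A1 = [] \<or> last A1 = X1")
        case True
        then have "good A1" using good_prefix[of A1 "[X0] @ f @ C"] G A1 by simp
        then show ?thesis using A1 by blast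
      next
        case False
        then obtain A2 where A2: "A1 = A2 @ [X0]" by (metis append_butlast_last_id letter_neq(1))
        have "A2 = [] \<or> last A2 = X1"
        proof (rule ccontr)
          assume "\<not> ?thesis"
          then obtain A3 where "A2 = A3 @ [X0]" by (metis append_butlast_last_id letter_neq(1))
          then have "A @ f @ C = A3 @ [X0, X0, X0] @ (f @ C)" using A1 A2 by simp
          then show False using nfw by (metis nf_def noF_def)
        qed
        then have "good A2" using good_prefix[of A2 "[X0, X0] @ f @ C"] G A1 A2 by simp
        then show ?thesis using A1 A2 by (intro exI[of _ A2] exI[of _ "[X0, X0]"]) simp
      qed
      then obtain A' s where As: "A = A' @ s" "good A'" "s = [X0] \<or> s = [X0, X0]" by blast
      have "good (s @ [X1])" using As(3) by (auto simp: good_def nf_def noF_Cons)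
      then have "good (A' @ (s @ [X1]) @ C1)" using good_append As(2) gC1 by blast
      then have "good (A @ C)" using As(1) C1 by simp
      then show ?thesis using cr u by simp
    qed
  qed
qed


lemma Iw_supp: "Iw a f b u \<noteq> 0 \<Longrightarrow> u \<in> {f, rev f, []}"
  by (auto simp: Iw_def single_def split: if_splits)

lemma deriv_nz:
  assumes "deriv k w (u, v) \<noteq> 0"
  shows "\<exists>j\<in>{0..length w - k}. Iw ((X1 # w @ [X0]) ! j) (take k (drop j w))
            ((X1 # w @ [X0]) ! (j + k + 1)) u \<noteq> 0 \<and> v = take j w @ drop (j + k) w"
proof -
  have "(\<Sum>j\<in>{0..length w - k}. Iw ((X1 # w @ [X0]) ! j) (take k (drop j w))
            ((X1 # w @ [X0]) ! (j + k + 1)) u * (if v = take j w @ drop (j + k) w then 1 else 0)) \<noteq> 0"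
    using assms unfolding deriv_def Let_def prod.case .
  then obtain j where "j \<in> {0..length w - k}" "Iw ((X1 # w @ [X0]) ! j) (take k (drop j w))
            ((X1 # w @ [X0]) ! (j + k + 1)) u * (if v = take j w @ drop (j + k) w then 1 else 0) \<noteq> 0"
    by (rule sum.not_neutral_contains_not_neutral)
  then show ?thesis by (cases "v = take j w @ drop (j + k) w") auto
qed

lemma deriv_finite: "finite {p. deriv k w p \<noteq> 0}"
proof (rule finite_subset)
  show "{p. deriv k w p \<noteq> 0} \<subseteq> (\<Union>j\<in>{0..length w - k}.
      {take k (drop j w), rev (take k (drop j w)), []} \<times> {take j w @ drop (j + k) w})"
  proof
    fix p assume "p \<in> {p. deriv k w p \<noteq> 0}"
    then obtain u v where p: "p = (u, v)" "deriv k w (u, v) \<noteq> 0" by (cases p) auto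
    then show "p \<in> (\<Union>j\<in>{0..length w - k}.
      {take k (drop j w), rev (take k (drop j w)), []} \<times> {take j w @ drop (j + k) w})"
    proof -
      obtain j where j: "j\<in>{0..length w - k}" "Iw ((X1 # w @ [X0]) ! j) (take k (drop j w))
            ((X1 # w @ [X0]) ! (j + k + 1)) u \<noteq> 0" "v = take j w @ drop (j + k) w"
        using deriv_nz[OF p(2)] by blast
      have "u \<in> {take k (drop j w), rev (take k (drop j w)), []}" using Iw_supp[OF j(2)] .
      then have "p \<in> {take k (drop j w), rev (take k (drop j w)), []} \<times> {take j w @ drop (j + k) w}"
        using p(1) j(3) by simp
      then show ?thesis using j(1) by blast
    qed
  qed
qed auto


lemma deriv_key:
  assumes B: "Bword w l" and k: "odd k" "k \<le> length w" and nz: "deriv k w (u, v) \<noteq> 0"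
  shows "length u = k \<and> length v = length w - k \<and> (\<exists>l'. Bword v l' \<and> l' < l \<and>
           (l' + 1 = l \<longrightarrow> u \<in> B1words))"
proof -
  obtain j where j: "j \<le> length w - k" and
    I: "Iw ((X1 # w @ [X0]) ! j) (take k (drop j w)) ((X1 # w @ [X0]) ! (j + k + 1)) u \<noteq> 0"
    and v: "v = take j w @ drop (j + k) w"
    using deriv_nz[OF nz] by auto
  define A where "A = take j w"
  define f where "f = take k (drop j w)"
  define C where "C = drop (j + k) w"
  have w: "w = A @ f @ C" unfolding A_def f_def C_def
    by (metis append_take_drop_id drop_drop add.commute)
  have lf: "length f = k" unfolding f_def using j k by simp
  have lA: "length A = j" unfolding A_def using j k by simp
  have e: "X1 # w @ [X0] = (X1 # A) @ f @ (C @ [X0])" using w by simp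
  have "(X1 # w @ [X0]) ! j = (X1 # A) ! j" unfolding e by (rule nth_append_left) (simp add: lA)
  then have e1: "(X1 # w @ [X0]) ! j = last (X1 # A)"
    by (metis last_conv_nth list.distinct(1) length_Cons lA diff_Suc_1)
  have e2: "(X1 # w @ [X0]) ! (j + k + 1) = hd (C @ [X0])"
    unfolding e using lA lf by (simp add: nth_append hd_conv_nth)
  have K: "length u = length f \<and> good (A @ C) \<and> count_list f X1 < count_list f X0 \<and>
         (count_list f X0 = Suc (count_list f X1) \<longrightarrow> u \<in> B1words)"
    using key[of A f C u] Bword_good[OF B] w I e1 e2 k lf unfolding f_def[symmetric] by simp
  have vAC: "v = A @ C" using v A_def C_def by simp
  obtain l' where B': "Bword v l'" using K good_Bword vAC by blast
  have c1: "int l = int (count_list w X0) - int (count_list w X1)" using Bword_count[OF B] .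
  have c2: "int l' = int (count_list v X0) - int (count_list v X1)" using Bword_count[OF B'] .
  have "int l' = int l - (int (count_list f X0) - int (count_list f X1))"
    using c1 c2 w vAC by simp
  then have "l' < l \<and> (l' + 1 = l \<longrightarrow> u \<in> B1words)" using K by auto
  moreover have "length v = length w - k" using vAC w lf by simp
  ultimately show ?thesis using K lf B' by blast
qed

theorem mainTheorem16:
  fixes r l N :: nat and w :: word
  assumes "r \<ge> 1" and "l \<ge> 1" and "N \<ge> 2 * r + 1"
    and "Bword w l" and "length w = N"
  shows "in_tensor {u. length u = 2 * r + 1} (Fwords (int l - 1)) (deriv (2 * r + 1) w)
       \<and> (\<exists>\<eta>. in_tensor B1words {v. Bword v (l - 1) \<and> length v = N - (2 * r + 1)} \<eta>
              \<and> in_tensor {u. length u = 2 * r + 1} (Fwords (int l - 2))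
                  (\<lambda>p. deriv (2 * r + 1) w p - \<eta> p))"
proof -
  define k where "k = 2 * r + 1"
  have k: "odd k" "k \<le> length w" using assms unfolding k_def by auto
  note DK = deriv_key[OF assms(4) k]
  have P1: "in_tensor {u. length u = k} (Fwords (int l - 1)) (deriv k w)"
    unfolding in_tensor_def Fwords_def
  proof (rule conjI[OF deriv_finite], intro allI impI)
    fix u v assume "deriv k w (u, v) \<noteq> 0"
    from DK[OF this] show "u \<in> {u. length u = k} \<and> v \<in> {v. \<exists>m. Bword v m \<and> int m \<le> int l - 1}"
      by force
  qed
  define \<eta> where "\<eta> = (\<lambda>(u, v). if Bword v (l - 1) then deriv k w (u, v) else 0)"
  have F1: "finite {p. \<eta> p \<noteq> 0}"
    by (rule finite_subset[OF _ deriv_finite[of k w]]) (auto simp: \<eta>_def split: if_splits)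
  have F2: "finite {p. deriv k w p - \<eta> p \<noteq> 0}"
    by (rule finite_subset[OF _ deriv_finite[of k w]]) (auto simp: \<eta>_def split: if_splits)
  have P2: "in_tensor B1words {v. Bword v (l - 1) \<and> length v = N - k} \<eta>"
    unfolding in_tensor_def
  proof (rule conjI[OF F1], intro allI impI)
    fix u v assume a: "\<eta> (u, v) \<noteq> 0"
    then have b: "Bword v (l - 1)" "deriv k w (u, v) \<noteq> 0" by (auto simp: \<eta>_def split: if_splits)
    from DK[OF b(2)] obtain l' where "Bword v l'" "l' < l" "l' + 1 = l \<longrightarrow> u \<in> B1words"
      "length v = length w - k" by blast
    moreover have "l' = l - 1" using Bword_unique b(1) \<open>Bword v l'\<close> by blast
    ultimately show "u \<in> B1words \<and> v \<in> {v. Bword v (l - 1) \<and> length v = N - k}"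
      using b(1) assms by auto
  qed
  have P3: "in_tensor {u. length u = k} (Fwords (int l - 2)) (\<lambda>p. deriv k w p - \<eta> p)"
    unfolding in_tensor_def Fwords_def
  proof (rule conjI[OF F2], intro allI impI)
    fix u v assume a: "deriv k w (u, v) - \<eta> (u, v) \<noteq> 0"
    then have b: "\<not> Bword v (l - 1)" "deriv k w (u, v) \<noteq> 0" by (auto simp: \<eta>_def split: if_splits)
    from DK[OF b(2)] obtain l' where "Bword v l'" "l' < l" "length u = k" by blast
    moreover have "l' \<noteq> l - 1" using b(1) \<open>Bword v l'\<close> by auto
    ultimately show "u \<in> {u. length u = k} \<and> v \<in> {v. \<exists>m. Bword v m \<and> int m \<le> int l - 2}"
      by force
  qed
  show ?thesis using P1 P2 P3 unfolding k_def by blast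
qed

end
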